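(* Assume the setting below and fix $m\in\mathbb{N}$. Let $r=r_m$ be such that the matrix $\mathbf{M}=(P^t(0,j))_{1\le t\le r,0\le j\le m}$ has rank $m+1$. Then for every $k\in\mathbb{N}$ there is a real matrix $A_k$ (with rows indexed by $\{0,\dots,m\}^k$ and columns by $\{1,\dots,r\}^k$), depending only on $q,m,k$, such that for every stochastic scenery $\eta$ with $\ell\le m$ and every bounded measurable $\phi$ with $\int_{\mathbb{R}}\phi\,d\alpha=0$, $$\mathbf{Q}^k(\phi)=A_k\,\mathbf{p}^k(\phi).$$ (One may take $A_k$ to be a left inverse of the $k$-fold tensor power $\mathbf{M}^{\otimes k}$.)
   Context: Setting: $q$ is a probability mass function on $\mathbb{Z}$ with $\sum_z zq(z)=0$, $\sum_z z^2q(z)<\infty$, $q(z)=q(-z)$ for all $z$, $\gcd\{n\ge1:q^{*n}(0)>0\}=1$, and support generating $\mathbb{Z}$; $S$ is the random walk with increment law $q$, $P^t(z,w)=P[S_t=w\mid S_0=z]$. $\alpha\in\mathcal{P}(\mathbb{R})$ is a reference measure, and a stochastic scenery $\eta:\mathbb{Z}\to\mathcal{P}(\mathbb{R})$ with $\eta(z)\neq\alpha$ for at least one and at most finitely many $z$; the observations $(X_n)$ are, conditionally on $S$, independent with law $\eta(S_n)$. Let $a=\min\{j:\eta(j)\neq\alpha\}$, $b=\max\{j:\eta(j)\neq\alpha\}$, $\ell=b-a$. For bounded measurable $\phi$, $\langle\phi\rangle_z=\int_{\mathbb{R}}\phi\,d\eta(z)$. For $\mathbf{t}=(t_1,\dots,t_k)\in\mathbb{N}^k$,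 $p_{\mathbf{t}}(\phi)=\sum_{z\in\mathbb{Z}}E[\phi(X_0)\phi(X_{t_1})\cdots\phi(X_{t_1+\cdots+t_k})\mid S_0=z]$, and $\mathbf{p}^k(\phi)$ is the vector $(p_{\mathbf{t}}(\phi))_{\mathbf{t}\in\{1,\dots,r\}^k}$. For $\mathbf{d}=(d_1,\dots,d_k)\in\{0,1,\dots,m\}^k$, $$Q^k_{\mathbf{d}}(\phi)=\sum_{\substack{(z_1,\dots,z_{k+1})\in\mathbb{Z}^{k+1}\\ |z_{j+1}-z_j|=d_j,\ j=1,\dots,k}}\langle\phi\rangle_{z_1}\langle\phi\rangle_{z_2}\cdots\langle\phi\rangle_{z_{k+1}},$$ and $\mathbf{Q}^k(\phi)=(Q^k_{\mathbf{d}}(\phi))_{\mathbf{d}\in\{0,\dots,m\}^k}$. *)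

theory Defs
  imports "HOL-Probability.Probability" "Jordan_Normal_Form.DL_Rank"
begin

definition admissible_q :: "int pmf \<Rightarrow> bool" where
  "admissible_q q \<longleftrightarrow>
     integrable (measure_pmf q) (\<lambda>z. (real_of_int z)^2)
   \<and> measure_pmf.expectation q real_of_int = 0
   \<and> (\<forall>z. pmf q z = pmf q (-z))
   \<and> (\<forall>G::int set. (0 \<in> G \<and> (\<forall>x\<in>G. \<forall>y\<in>G. x + y \<in> G \<and> - x \<in> G) \<and> set_pmf q \<subseteq> G)
          \<longrightarrow> G = UNIV)"

fun walk :: "int pmf \<Rightarrow> nat \<Rightarrow> int \<Rightarrow> int pmf" where
  "walk q 0 z = return_pmf z"
| "walk q (Suc t) z = bind_pmf (walk q t z) (\<lambda>x. map_pmf (\<lambda>y. x + y) q)"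

definition aperiodic_q :: "int pmf \<Rightarrow> bool" where
  "aperiodic_q q \<longleftrightarrow> Gcd {n::nat. n \<ge> 1 \<and> pmf (walk q n 0) 0 > 0} = 1"

definition Ptrans :: "int pmf \<Rightarrow> nat \<Rightarrow> int \<Rightarrow> int \<Rightarrow> real" where
  "Ptrans q t z w = pmf (walk q t z) w"

fun walk_path :: "int pmf \<Rightarrow> nat \<Rightarrow> int \<Rightarrow> int list pmf" where
  "walk_path q 0 z = return_pmf [z]"
| "walk_path q (Suc n) z =
     bind_pmf (walk_path q n z) (\<lambda>s. map_pmf (\<lambda>y. s @ [last s + y]) q)"

definition scenery :: "real measure \<Rightarrow> (int \<Rightarrow> real measure) \<Rightarrow> bool" where
  "scenery \<alpha> \<eta> \<longleftrightarrow> prob_space \<alpha> \<and> sets \<alpha> = sets borel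
     \<and> (\<forall>z. prob_space (\<eta> z) \<and> sets (\<eta> z) = sets borel)
     \<and> finite {z. \<eta> z \<noteq> \<alpha>} \<and> {z. \<eta> z \<noteq> \<alpha>} \<noteq> {}"

definition scenery_len :: "real measure \<Rightarrow> (int \<Rightarrow> real measure) \<Rightarrow> int" where
  "scenery_len \<alpha> \<eta> = Max {z. \<eta> z \<noteq> \<alpha>} - Min {z. \<eta> z \<noteq> \<alpha>}"

text \<open>Joint law of the observations (X_0,...,X_N) given S_0 = z: conditionally on the
  path S, the X_n are independent with law eta(S_n).\<close>
definition obs_law :: "int pmf \<Rightarrow> (int \<Rightarrow> real measure) \<Rightarrow> nat \<Rightarrow> int \<Rightarrow> (nat \<Rightarrow> real) measure" where
  "obs_law q \<eta> N z =
     measure_pmf (walk_path q N z) \<bind> (\<lambda>s. PiM {..N} (\<lambda>i. \<eta> (s ! i)))"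

definition p_t :: "int pmf \<Rightarrow> (int \<Rightarrow> real measure) \<Rightarrow> (real \<Rightarrow> real) \<Rightarrow> nat list \<Rightarrow> real" where
  "p_t q \<eta> \<phi> ts = infsum (\<lambda>z.
      \<integral>x. (\<Prod>i\<in>{0..length ts}. \<phi> (x (sum_list (take i ts)))) \<partial>(obs_law q \<eta> (sum_list ts) z))
    UNIV"

definition site_mean :: "(int \<Rightarrow> real measure) \<Rightarrow> (real \<Rightarrow> real) \<Rightarrow> int \<Rightarrow> real" where
  "site_mean \<eta> \<phi> z = (\<integral>x. \<phi> x \<partial>(\<eta> z))"

definition Qd :: "(int \<Rightarrow> real measure) \<Rightarrow> (real \<Rightarrow> real) \<Rightarrow> nat list \<Rightarrow> real" where
  "Qd \<eta> \<phi> ds = infsum (\<lambda>zs. prod_list (map (site_mean \<eta> \<phi>) zs))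
     {zs. length zs = length ds + 1 \<and> (\<forall>j < length ds. \<bar>zs ! (Suc j) - zs ! j\<bar> = int (ds ! j))}"

definition idx_d :: "nat \<Rightarrow> nat \<Rightarrow> nat list set" where
  "idx_d k m = {ds. length ds = k \<and> set ds \<subseteq> {0..m}}"

definition idx_t :: "nat \<Rightarrow> nat \<Rightarrow> nat list set" where
  "idx_t k r = {ts. length ts = k \<and> set ts \<subseteq> {1..r}}"

text \<open>The r x (m+1) matrix M = (P^t(0,j)), t = 1..r (row i is t = i+1), j = 0..m.\<close>
definition Mmat :: "int pmf \<Rightarrow> nat \<Rightarrow> nat \<Rightarrow> real Matrix.mat" where
  "Mmat q r m = Matrix.mat r (m + 1) (\<lambda>(i, j). Ptrans q (Suc i) 0 (int j))"

end

theory Submission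
  imports Defs
begin


lemma integral_bind_pmf_real:
  fixes f :: "'b \<Rightarrow> real"
  assumes "\<And>x. \<bar>f x\<bar> \<le> B"
  shows "(\<integral>x. f x \<partial>measure_pmf (bind_pmf M N)) = (\<integral>x. (\<integral>y. f y \<partial>measure_pmf (N x)) \<partial>measure_pmf M)"
proof -
  have "(\<integral>x. f x \<partial>measure_pmf (bind_pmf M N)) = (\<integral>x. f x \<partial>(measure_pmf M \<bind> (\<lambda>x. measure_pmf (N x))))"
    by (simp add: measure_pmf_bind)
  also have "\<dots> = (\<integral>x. (\<integral>y. f y \<partial>measure_pmf (N x)) \<partial>measure_pmf M)"
  proof (rule integral_bind[where K="count_space UNIV" and B=B and B'=1])
    show "f \<in> borel_measurable (count_space UNIV)" by simp
    show "\<And>x. x \<in> space (count_space UNIV) \<Longrightarrow> \<bar>f x\<bar> \<le> B" using assms by simp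
    show "(\<lambda>x. measure_pmf (N x)) \<in> measurable (measure_pmf M) (subprob_algebra (count_space UNIV))"
      by (auto simp: space_subprob_algebra intro!: prob_space_imp_subprob_space prob_space_measure_pmf)
    show "finite_measure (measure_pmf M)" by (rule measure_pmf.finite_measure_axioms)
    show "AE x in measure_pmf M. emeasure (measure_pmf (N x)) (space (measure_pmf (N x))) \<le> ennreal 1"
      by (simp add: measure_pmf.emeasure_space_1)
  qed
  finally show ?thesis .
qed

lemma pmf_integral_bound:
  fixes g :: "'b \<Rightarrow> real"
  assumes "\<And>x. \<bar>g x\<bar> \<le> B"
  shows "\<bar>\<integral>x. g x \<partial>measure_pmf M\<bar> \<le> B"
proof -
  have "\<bar>\<integral>x. g x \<partial>measure_pmf M\<bar> \<le> (\<integral>x. \<bar>g x\<bar> \<partial>measure_pmf M)"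
    by (rule integral_abs_bound)
  also have "\<dots> \<le> (\<integral>x. B \<partial>measure_pmf M)"
    apply (rule integral_mono)
      apply (rule measure_pmf.integrable_const_bound[where B=B])
    using assms by auto
  also have "\<dots> = B" by simp
  finally show ?thesis .
qed

lemma pmf_integrable_bound:
  fixes g :: "'b \<Rightarrow> real"
  assumes "\<And>x. \<bar>g x\<bar> \<le> B"
  shows "integrable (measure_pmf M) g"
  by (rule measure_pmf.integrable_const_bound[where B=B]) (use assms in auto)

lemma walk_path_length:
  "s \<in> set_pmf (walk_path q n z) \<Longrightarrow> length s = Suc n"
  by (induction n arbitrary: s) auto

definition Pop :: "int pmf \<Rightarrow> nat \<Rightarrow> (int \<Rightarrow> real) \<Rightarrow> int \<Rightarrow> real" where
  "Pop q t g x = (\<integral>y. g y \<partial>measure_pmf (walk q t x))"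

lemma Pop_0[simp]: "Pop q 0 g x = g x"
  by (simp add: Pop_def)

lemma Pop_bound: "(\<And>x. \<bar>g x\<bar> \<le> B) \<Longrightarrow> \<bar>Pop q t g x\<bar> \<le> B"
  unfolding Pop_def by (rule pmf_integral_bound)

lemma Pop_Suc:
  assumes "\<And>x. \<bar>g x\<bar> \<le> B"
  shows "Pop q (Suc a) g x = Pop q a (\<lambda>x'. \<integral>y. g (x' + y) \<partial>measure_pmf q) x"
  unfolding Pop_def walk.simps
  by (subst integral_bind_pmf_real[where B=B]) (use assms in auto)

lemma integral_pmf_cong_set:
  fixes f g :: "'b \<Rightarrow> real"
  assumes "\<And>x. x \<in> set_pmf M \<Longrightarrow> f x = g x"
  shows "(\<integral>x. f x \<partial>measure_pmf M) = (\<integral>x. g x \<partial>measure_pmf M)"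
  by (rule integral_cong_AE) (use assms in \<open>auto simp: AE_measure_pmf_iff\<close>)

lemma wp_markov:
  fixes F :: "int list \<Rightarrow> real" and g :: "int \<Rightarrow> real"
  assumes F: "\<And>s. \<bar>F s\<bar> \<le> B1" and g: "\<And>x. \<bar>g x\<bar> \<le> B2"
  shows "(\<integral>s. F (take (Suc N') s) * g (last s) \<partial>measure_pmf (walk_path q (N' + a) z))
       = (\<integral>s. F s * Pop q a g (last s) \<partial>measure_pmf (walk_path q N' z))"
  using g
proof (induction a arbitrary: g B2)
  case 0
  show ?case
    unfolding add_0_right Pop_0
    by (rule integral_pmf_cong_set) (auto dest: walk_path_length)
next
  case (Suc a)
  define g' where "g' = (\<lambda>x'. \<integral>y. g (x' + y) \<partial>measure_pmf q)"
  have g': "\<bar>g' x\<bar> \<le> B2" for x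
    unfolding g'_def by (rule pmf_integral_bound) (use Suc.prems in auto)
  have B1: "0 \<le> B1" using F[of "[]"] by linarith
  have "(\<integral>s. F (take (Suc N') s) * g (last s) \<partial>measure_pmf (walk_path q (N' + Suc a) z))
     = (\<integral>s. (\<integral>s'. F (take (Suc N') s') * g (last s') \<partial>measure_pmf (map_pmf (\<lambda>y. s @ [last s + y]) q))
           \<partial>measure_pmf (walk_path q (N' + a) z))"
    apply (simp only: add_Suc_right walk_path.simps)
    apply (rule integral_bind_pmf_real[where B="B1 * B2"])
    by (simp add: abs_mult F Suc.prems mult_mono B1)
  also have "\<dots> = (\<integral>s. F (take (Suc N') s) * g' (last s) \<partial>measure_pmf (walk_path q (N' + a) z))"
  proof (rule integral_pmf_cong_set)
    fix s assume "s \<in> set_pmf (walk_path q (N' + a) z)"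
    then have "length s = Suc (N' + a)" by (rule walk_path_length)
    then have "take (Suc N') (s @ [x]) = take (Suc N') s" for x by simp
    then show "(\<integral>s'. F (take (Suc N') s') * g (last s') \<partial>measure_pmf (map_pmf (\<lambda>y. s @ [last s + y]) q))
        = F (take (Suc N') s) * g' (last s)"
      by (simp add: g'_def)
  qed
  also have "\<dots> = (\<integral>s. F s * Pop q a g' (last s) \<partial>measure_pmf (walk_path q N' z))"
    by (rule Suc.IH) (rule g')
  also have "\<dots> = (\<integral>s. F s * Pop q (Suc a) g (last s) \<partial>measure_pmf (walk_path q N' z))"
    by (simp add: Pop_Suc[OF Suc.prems] g'_def)
  finally show ?case .
qed



fun Vg :: "int pmf \<Rightarrow> (int \<Rightarrow> real) \<Rightarrow> (int \<Rightarrow> real) \<Rightarrow> nat list \<Rightarrow> int \<Rightarrow> real" where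
  "Vg q f g [] = g"
| "Vg q f g (t # ts) = (\<lambda>z. f z * Pop q t (Vg q f g ts) z)"

lemma Vg_snoc: "Vg q f g (ts @ [t]) = Vg q f (\<lambda>x. f x * Pop q t g x) ts"
  by (induction ts) auto

definition J :: "int pmf \<Rightarrow> (int \<Rightarrow> real) \<Rightarrow> (int \<Rightarrow> real) \<Rightarrow> nat list \<Rightarrow> int \<Rightarrow> real" where
  "J q f g ts z = (\<integral>s. (\<Prod>i<length ts. f (s ! sum_list (take i ts))) * g (last s)
      \<partial>measure_pmf (walk_path q (sum_list ts) z))"

lemma abs_prod_bound:
  fixes f :: "'b \<Rightarrow> real"
  assumes "\<And>x. \<bar>f x\<bar> \<le> C"
  shows "\<bar>\<Prod>i\<in>I. f (h i)\<bar> \<le> C ^ card I"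
proof (cases "finite I")
  case True
  have "\<bar>\<Prod>i\<in>I. f (h i)\<bar> = (\<Prod>i\<in>I. \<bar>f (h i)\<bar>)" by (simp add: abs_prod)
  also have "\<dots> \<le> (\<Prod>i\<in>I. C)" by (rule prod_mono) (use assms in auto)
  also have "\<dots> = C ^ card I" by simp
  finally show ?thesis .
qed simp

lemma J_eq:
  fixes f :: "int \<Rightarrow> real"
  assumes f: "\<And>x. \<bar>f x\<bar> \<le> C"
  shows "(\<And>x. \<bar>g x\<bar> \<le> B) \<Longrightarrow> J q f g ts z = Vg q f g ts z"
proof (induction ts arbitrary: g B rule: rev_induct)
  case Nil
  then show ?case by (simp add: J_def)
next
  case (snoc t ts)
  define N' where "N' = sum_list ts"
  define k where "k = length ts"
  define F where "F = (\<lambda>s. (\<Prod>i<k. f (s ! sum_list (take i ts))) * f (last s))"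
  have C: "0 \<le> C" using f[of 0] by linarith
  have Fb: "\<bar>F s\<bar> \<le> C ^ k * C" for s
    unfolding F_def abs_mult
    by (rule mult_mono) (use abs_prod_bound[OF f, where I="{..<k}"] f C in auto)
  have gb: "\<bar>f x * Pop q t g x\<bar> \<le> C * B" for x
    unfolding abs_mult by (rule mult_mono) (use f Pop_bound[OF snoc.prems] C in auto)
  have "J q f g (ts @ [t]) z = (\<integral>s. F (take (Suc N') s) * g (last s)
      \<partial>measure_pmf (walk_path q (N' + t) z))"
    unfolding J_def sum_list_append sum_list.Cons sum_list.Nil add_0_right N'_def[symmetric]
  proof (rule integral_pmf_cong_set)
    fix s assume "s \<in> set_pmf (walk_path q (N' + t) z)"
    then have len: "length s = Suc (N' + t)" by (auto dest: walk_path_length)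
    have T: "sum_list (take i ts) \<le> N'" for i
      unfolding N'_def by (metis append_take_drop_id le_add1 sum_list_append)
    have "(\<Prod>i<length (ts @ [t]). f (s ! sum_list (take i (ts @ [t]))))
        = (\<Prod>i<k. f (s ! sum_list (take i ts))) * f (s ! N')"
      by (simp add: k_def N'_def prod.lessThan_Suc)
    moreover have "(\<Prod>i<k. f (s ! sum_list (take i ts))) = (\<Prod>i<k. f (take (Suc N') s ! sum_list (take i ts)))"
      by (rule prod.cong) (use T in \<open>auto simp: le_imp_less_Suc\<close>)
    moreover have "last (take (Suc N') s) = s ! N'"
    proof -
      have "take (Suc N') s \<noteq> []" using len by (auto simp: take_eq_Nil)
      then have "last (take (Suc N') s) = take (Suc N') s ! (length (take (Suc N') s) - 1)"
        by (rule last_conv_nth)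
      also have "\<dots> = s ! N'" using len by simp
      finally show ?thesis .
    qed
    ultimately show "(\<Prod>i<length (ts @ [t]). f (s ! sum_list (take i (ts @ [t])))) * g (last s)
        = F (take (Suc N') s) * g (last s)"
      unfolding F_def by simp
  qed
  also have "\<dots> = (\<integral>s. F s * Pop q t g (last s) \<partial>measure_pmf (walk_path q N' z))"
    by (rule wp_markov[OF Fb snoc.prems])
  also have "\<dots> = J q f (\<lambda>x. f x * Pop q t g x) ts z"
    unfolding J_def F_def N'_def k_def by (simp add: mult.assoc)
  also have "\<dots> = Vg q f (\<lambda>x. f x * Pop q t g x) ts z"
    by (rule snoc.IH[OF gb])
  finally show ?case by (simp add: Vg_snoc)
qed



lemma PiM_prod_integral:
  fixes M :: "nat \<Rightarrow> real measure" and \<phi> :: "real \<Rightarrow> real"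
  assumes P: "\<And>i. prob_space (M i)" and S: "\<And>i. sets (M i) = sets borel"
    and \<phi>m: "\<phi> \<in> borel_measurable borel" and \<phi>b: "\<And>x. \<bar>\<phi> x\<bar> \<le> C"
    and inj: "inj_on T I" and sub: "T ` I \<subseteq> {..N}" and fin: "finite I"
  shows "(\<integral>x. (\<Prod>i\<in>I. \<phi> (x (T i))) \<partial>PiM {..N} M) = (\<Prod>i\<in>I. \<integral>y. \<phi> y \<partial>M (T i))"
proof -
  interpret product_sigma_finite M
    unfolding product_sigma_finite_def using P prob_space_imp_sigma_finite by blast
  define h where "h j = (if j \<in> T ` I then \<phi> else (\<lambda>_. 1))" for j
  have \<phi>m': "\<phi> \<in> borel_measurable (M j)" for j
    using \<phi>m by (simp add: measurable_cong_sets[OF S refl])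
  have int\<phi>: "integrable (M j) \<phi>" for j
  proof -
    interpret prob_space "M j" by (rule P)
    show ?thesis by (rule integrable_const_bound[where B=C]) (use \<phi>b \<phi>m' in auto)
  qed
  have inth: "integrable (M j) (h j)" for j
  proof -
    interpret prob_space "M j" by (rule P)
    show ?thesis using int\<phi> by (simp add: h_def)
  qed
  have eq1: "(\<Prod>i\<in>I. \<phi> (x (T i))) = (\<Prod>j\<in>{..N}. h j (x j))" for x :: "nat \<Rightarrow> real"
  proof -
    have "(\<Prod>i\<in>I. \<phi> (x (T i))) = (\<Prod>j\<in>T ` I. \<phi> (x j))"
      by (simp add: prod.reindex[OF inj])
    also have "\<dots> = (\<Prod>j\<in>{..N}. if j \<in> T ` I then \<phi> (x j) else 1)"
      apply (subst prod.If_cases)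
       apply simp
      apply simp
      apply (rule prod.cong)
      using sub by auto
    also have "\<dots> = (\<Prod>j\<in>{..N}. h j (x j))"
      by (rule prod.cong) (auto simp: h_def)
    finally show ?thesis .
  qed
  have "(\<integral>x. (\<Prod>i\<in>I. \<phi> (x (T i))) \<partial>PiM {..N} M) = (\<integral>x. (\<Prod>j\<in>{..N}. h j (x j)) \<partial>PiM {..N} M)"
    by (simp add: eq1)
  also have "\<dots> = (\<Prod>j\<in>{..N}. integral\<^sup>L (M j) (h j))"
    by (rule product_integral_prod) (use inth in auto)
  also have "\<dots> = (\<Prod>j\<in>{..N}. if j \<in> T ` I then integral\<^sup>L (M j) \<phi> else 1)"
  proof (rule prod.cong)
    fix j
    interpret prob_space "M j" by (rule P)
    show "integral\<^sup>L (M j) (h j) = (if j \<in> T ` I then integral\<^sup>L (M j) \<phi> else 1)"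
      by (simp add: h_def prob_space)
  qed simp
  also have "\<dots> = (\<Prod>j\<in>T ` I. integral\<^sup>L (M j) \<phi>)"
    apply (subst prod.If_cases)
     apply simp
    apply simp
    apply (rule prod.cong)
    using sub by auto
  also have "\<dots> = (\<Prod>i\<in>I. \<integral>y. \<phi> y \<partial>M (T i))"
    by (simp add: prod.reindex[OF inj])
  finally show ?thesis .
qed

lemma T_mono:
  fixes ts :: "nat list"
  assumes "\<forall>t\<in>set ts. 1 \<le> t" "i < j" "j \<le> length ts"
  shows "sum_list (take i ts) < sum_list (take j ts)"
  using assms(2,3)
proof (induction j)
  case 0 then show ?case by simp
next
  case (Suc j)
  have "sum_list (take (Suc j) ts) = sum_list (take j ts) + ts ! j"
    using Suc.prems by (simp add: take_Suc_conv_app_nth)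
  moreover have "1 \<le> ts ! j" using assms(1) Suc.prems by auto
  ultimately show ?case using Suc by (cases "i = j") force+
qed

lemma T_le: "sum_list (take i ts) \<le> sum_list (ts :: nat list)"
  by (metis append_take_drop_id le_add1 sum_list_append)

lemma obs_integral:
  fixes \<eta> :: "int \<Rightarrow> real measure" and \<phi> :: "real \<Rightarrow> real"
  assumes P: "\<And>z. prob_space (\<eta> z)" and S: "\<And>z. sets (\<eta> z) = sets borel"
    and \<phi>m: "\<phi> \<in> borel_measurable borel" and \<phi>b: "\<And>x. \<bar>\<phi> x\<bar> \<le> C"
    and ts: "\<forall>t\<in>set ts. 1 \<le> t"
  shows "(\<integral>x. (\<Prod>i\<in>{0..length ts}. \<phi> (x (sum_list (take i ts)))) \<partial>obs_law q \<eta> (sum_list ts) z)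
       = J q (site_mean \<eta> \<phi>) (site_mean \<eta> \<phi>) ts z"
proof -
  define N where "N = sum_list ts"
  define k where "k = length ts"
  define T where "T i = sum_list (take i ts)" for i
  define f where "f = site_mean \<eta> \<phi>"
  have C: "0 \<le> C" using \<phi>b[of 0] by linarith
  have Tsub: "T ` {0..k} \<subseteq> {..N}" unfolding T_def N_def using T_le by auto
  have Tinj: "inj_on T {0..k}"
  proof (rule linorder_inj_onI)
    fix i j assume "i < j" "i \<in> {0..k}" "j \<in> {0..k}"
    then show "T i \<noteq> T j" unfolding T_def k_def using T_mono[OF ts, of i j] by auto
  qed auto
  have meas: "(\<lambda>x. \<Prod>i\<in>{0..k}. \<phi> (x (T i))) \<in> borel_measurable (PiM {..N} (\<lambda>_. borel))"
    apply (rule borel_measurable_prod)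
    apply (rule measurable_compose[OF _ \<phi>m])
    apply (rule measurable_component_singleton)
    using Tsub by force
  have "(\<integral>x. (\<Prod>i\<in>{0..k}. \<phi> (x (T i))) \<partial>obs_law q \<eta> N z)
      = (\<integral>s. (\<integral>x. (\<Prod>i\<in>{0..k}. \<phi> (x (T i))) \<partial>PiM {..N} (\<lambda>i. \<eta> (s ! i))) \<partial>measure_pmf (walk_path q N z))"
    unfolding obs_law_def
  proof (rule integral_bind[where K="PiM {..N} (\<lambda>_. borel)" and B="C ^ card {0..k}" and B'=1])
    show "(\<lambda>x. \<Prod>i\<in>{0..k}. \<phi> (x (T i))) \<in> borel_measurable (PiM {..N} (\<lambda>_. borel))" by (rule meas)
    show "\<bar>\<Prod>i\<in>{0..k}. \<phi> (x (T i))\<bar> \<le> C ^ card {0..k}" for x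
      by (rule abs_prod_bound[OF \<phi>b])
    show "(\<lambda>s. PiM {..N} (\<lambda>i. \<eta> (s ! i))) \<in> measurable (measure_pmf (walk_path q N z)) (subprob_algebra (PiM {..N} (\<lambda>_. borel)))"
      by (auto simp: space_subprob_algebra P S intro!: prob_space_imp_subprob_space prob_space_PiM sets_PiM_cong)
    show "finite_measure (measure_pmf (walk_path q N z))" by (rule measure_pmf.finite_measure_axioms)
    show "AE s in measure_pmf (walk_path q N z). emeasure (PiM {..N} (\<lambda>i. \<eta> (s ! i))) (space (PiM {..N} (\<lambda>i. \<eta> (s ! i)))) \<le> ennreal 1"
      by (auto intro!: AE_I2 simp: prob_space.emeasure_space_1[OF prob_space_PiM] P)
  qed
  also have "\<dots> = (\<integral>s. (\<Prod>i\<in>{0..k}. f (s ! T i)) \<partial>measure_pmf (walk_path q N z))"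
    apply (rule Bochner_Integration.integral_cong[OF refl])
    unfolding f_def site_mean_def
    apply (rule PiM_prod_integral[OF P S \<phi>m \<phi>b Tinj Tsub])
    by simp
  also have "\<dots> = J q f f ts z"
    unfolding J_def N_def[symmetric]
  proof (rule integral_pmf_cong_set)
    fix s assume "s \<in> set_pmf (walk_path q N z)"
    then have len: "length s = Suc N" by (rule walk_path_length)
    have "T k = N" unfolding T_def k_def N_def by simp
    moreover have "s \<noteq> []" using len by auto
    ultimately have "s ! T k = last s" using len by (simp add: last_conv_nth)
    then show "(\<Prod>i\<in>{0..k}. f (s ! T i)) = (\<Prod>i<length ts. f (s ! sum_list (take i ts))) * f (last s)"
      by (simp add: atLeast0AtMost prod.atMost_Suc T_def k_def lessThan_Suc_atMost[symmetric])
  qed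
  finally show ?thesis unfolding N_def T_def k_def f_def .
qed



lemma walk_shift: "walk q t x = map_pmf ((+) x) (walk q t 0)"
proof (induction t)
  case 0 then show ?case by simp
next
  case (Suc t)
  show ?case
    apply (simp add: Suc bind_map_pmf map_bind_pmf pmf.map_comp o_def)
    apply (intro bind_pmf_cong refl map_pmf_cong)
    by (simp add: add.assoc)
qed

lemma walk_sym:
  assumes "map_pmf uminus q = q"
  shows "map_pmf uminus (walk q t (0::int)) = walk q t 0"
proof (induction t)
  case 0 then show ?case by simp
next
  case (Suc t)
  have "map_pmf uminus (walk q (Suc t) 0)
      = bind_pmf (walk q t 0) (\<lambda>x. map_pmf (\<lambda>y. - x + y) (map_pmf uminus q))"
    apply (simp add: map_bind_pmf pmf.map_comp o_def)
    apply (intro bind_pmf_cong refl map_pmf_cong)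
    by simp
  also have "\<dots> = bind_pmf (map_pmf uminus (walk q t 0)) (\<lambda>x. map_pmf (\<lambda>y. x + y) q)"
    apply (simp add: assms bind_map_pmf)
    apply (intro bind_pmf_cong refl map_pmf_cong)
    by simp
  also have "\<dots> = walk q (Suc t) 0" by (simp add: Suc)
  finally show ?case .
qed

lemma q_sym:
  assumes "admissible_q q" shows "map_pmf uminus q = q"
proof (rule pmf_eqI)
  fix z :: int
  have "pmf (map_pmf uminus q) z = pmf (map_pmf uminus q) (- (- z))" by simp
  also have "\<dots> = pmf q (- z)" by (rule pmf_map_inj') (simp add: inj_def)
  also have "\<dots> = pmf q z" using assms unfolding admissible_q_def by metis
  finally show "pmf (map_pmf uminus q) z = pmf q z" .
qed

lemma Ptrans_abs:
  assumes "admissible_q q"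
  shows "Ptrans q t x w = Ptrans q t 0 \<bar>w - x\<bar>"
proof -
  have "Ptrans q t x w = pmf (map_pmf ((+) x) (walk q t 0)) (x + (w - x))"
    unfolding Ptrans_def by (subst walk_shift) simp
  also have "\<dots> = pmf (walk q t 0) (w - x)" by (rule pmf_map_inj') (simp add: inj_def)
  also have "\<dots> = pmf (walk q t 0) \<bar>w - x\<bar>"
  proof (cases "w - x \<ge> 0")
    case False
    have "pmf (walk q t 0) (w - x) = pmf (map_pmf uminus (walk q t 0)) (- (x - w))"
      by (subst walk_sym[OF q_sym[OF assms]]) simp
    also have "\<dots> = pmf (walk q t 0) (x - w)"
      by (rule pmf_map_inj') (simp add: inj_def)
    finally show ?thesis using False by simp
  qed simp
  finally show ?thesis unfolding Ptrans_def .
qed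

lemma Pop_sum:
  assumes "finite W" "\<And>w. h w \<noteq> 0 \<Longrightarrow> w \<in> W"
  shows "Pop q t h x = (\<Sum>w\<in>W. Ptrans q t x w * h w)"
  unfolding Pop_def Ptrans_def
  by (subst integral_measure_pmf[OF assms(1)]) (use assms(2) in auto)

definition lists_of :: "'a set \<Rightarrow> nat \<Rightarrow> 'a list set" where
  "lists_of A n = {xs. length xs = n \<and> set xs \<subseteq> A}"

lemma finite_lists_of: "finite A \<Longrightarrow> finite (lists_of A n)"
  unfolding lists_of_def using finite_lists_length_eq[of A n] by (simp add: conj_commute)

lemma lists_of_0[simp]: "lists_of A 0 = {[]}"
  unfolding lists_of_def by auto

lemma lists_of_Suc: "lists_of A (Suc n) = (\<lambda>(a, xs). a # xs) ` (A \<times> lists_of A n)"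
  unfolding lists_of_def
  by (auto simp: length_Suc_conv image_iff)

lemma sum_lists_of_Suc:
  assumes "finite A"
  shows "sum F (lists_of A (Suc n)) = (\<Sum>a\<in>A. \<Sum>xs\<in>lists_of A n. F (a # xs))"
proof -
  have inj: "inj_on (\<lambda>(a, xs). a # xs) (A \<times> lists_of A n)"
    by (auto simp: inj_on_def)
  show ?thesis
    unfolding lists_of_Suc sum.reindex[OF inj]
    by (simp add: sum.cartesian_product case_prod_unfold)
qed

fun adiff :: "int list \<Rightarrow> nat list" where
  "adiff (z # w # zs) = nat \<bar>w - z\<bar> # adiff (w # zs)"
| "adiff _ = []"

fun prodM :: "int pmf \<Rightarrow> nat list \<Rightarrow> nat list \<Rightarrow> real" where
  "prodM q (t # ts) (d # ds) = Ptrans q t 0 (int d) * prodM q ts ds"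
| "prodM q _ _ = 1"

lemma Vg_zero: "f z = 0 \<Longrightarrow> Vg q f f ts z = 0"
  by (cases ts) auto

lemma Vg_sum:
  assumes adm: "admissible_q q" and W: "finite W" and fW: "\<And>z. f z \<noteq> 0 \<Longrightarrow> z \<in> W"
  shows "Vg q f f ts z = (\<Sum>zs\<in>lists_of W (length ts). prod_list (map f (z # zs)) * prodM q ts (adiff (z # zs)))"
proof (induction ts arbitrary: z)
  case Nil
  then show ?case by simp
next
  case (Cons t ts)
  have "Pop q t (Vg q f f ts) z = (\<Sum>w\<in>W. Ptrans q t z w * Vg q f f ts w)"
    by (rule Pop_sum[OF W]) (use Vg_zero fW in blast)
  then have "Vg q f f (t # ts) z = f z * (\<Sum>w\<in>W. Ptrans q t z w * Vg q f f ts w)"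
    by simp
  also have "\<dots> = (\<Sum>w\<in>W. \<Sum>zs\<in>lists_of W (length ts).
      prod_list (map f (z # w # zs)) * prodM q (t # ts) (adiff (z # w # zs)))"
    by (simp add: Cons.IH sum_distrib_left Ptrans_abs[OF adm, of t z] mult_ac)
  also have "\<dots> = (\<Sum>zs\<in>lists_of W (length (t # ts)). prod_list (map f (z # zs)) * prodM q (t # ts) (adiff (z # zs)))"
    by (simp add: sum_lists_of_Suc[OF W])
  finally show ?case .
qed

lemma adiff_len: "length (adiff zs) = length zs - 1"
  by (induction zs rule: adiff.induct) auto

lemma adiff_set: "set zs \<subseteq> {a..a + int m} \<Longrightarrow> set (adiff zs) \<subseteq> {0..m}"
  by (induction zs rule: adiff.induct) auto

lemma adiff_cond:
  "length zs = Suc (length ds) \<Longrightarrow>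
   (\<forall>j < length ds. \<bar>zs ! (Suc j) - zs ! j\<bar> = int (ds ! j)) \<longleftrightarrow> adiff zs = ds"
proof (induction zs arbitrary: ds rule: adiff.induct)
  case (1 z w zs)
  then obtain d ds' where ds: "ds = d # ds'" by (cases ds) auto
  have "(\<forall>j < length ds. \<bar>(z # w # zs) ! (Suc j) - (z # w # zs) ! j\<bar> = int (ds ! j))
     \<longleftrightarrow> \<bar>w - z\<bar> = int d \<and> (\<forall>j < length ds'. \<bar>(w # zs) ! (Suc j) - (w # zs) ! j\<bar> = int (ds' ! j))"
    unfolding ds by (auto simp: All_less_Suc2)
  also have "\<dots> \<longleftrightarrow> adiff (z # w # zs) = ds"
    using "1.IH"[of ds'] "1.prems" ds by auto
  finally show ?case .
qed auto



lemma (in vec_space) rect_non_distinct_low_rank: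
  assumes "A \<in> carrier_mat n nc" and "\<not> distinct (cols A)"
  shows "rank A < nc"
proof -
  obtain S where S: "maximal S (\<lambda>T. T \<subseteq> set (cols A) \<and> lin_indpt T)"
    using maximal_exists[of "(\<lambda>T. T \<subseteq> set (cols A) \<and> lin_indpt T)" "card (set (cols A))" "{}"]
    by (meson List.finite_set card_mono empty_iff empty_subsetI finite_lin_indpt2 rev_finite_subset)
  then have "card S \<le> card (set (cols A))" by (simp add: card_mono maximal_def)
  also have "\<dots> < length (cols A)"
    using assms(2) card_distinct card_length le_neq_implies_less by blast
  also have "\<dots> = nc" using assms(1) by simp
  finally show ?thesis
    using rank_card_indpt[OF assms(1) S] by simp
qed

lemma (in vec_space) full_rank_kernel:
  assumes A: "A \<in> carrier_mat n nc" and rk: "rank A = nc"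
    and v: "v \<in> carrier_vec nc" and Av: "A *\<^sub>v v = 0\<^sub>v n"
  shows "v = 0\<^sub>v nc"
proof (rule ccontr)
  assume nz: "v \<noteq> 0\<^sub>v nc"
  show False
  proof (cases "distinct (cols A)")
    case True
    then have "lin_indpt (set (cols A))"
      using full_rank_lin_indpt[OF A rk] by blast
    moreover have "lin_dep (set (cols A))"
      using lin_depI[OF A v nz Av True] .
    ultimately show False by blast
  next
    case False
    then show False using rect_non_distinct_low_rank[OF A] rk by simp
  qed
qed

lemma self_scalar_zero:
  fixes w :: "real Matrix.vec"
  assumes "w \<in> carrier_vec n" "w \<bullet> w = 0"
  shows "w = 0\<^sub>v n"
proof -
  have "(\<Sum>i\<in>{0..<n}. w $ i * w $ i) = 0" using assms by (simp add: scalar_prod_def)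
  then have "\<forall>i\<in>{0..<n}. w $ i * w $ i = 0"
    by (subst sum_nonneg_eq_0_iff[symmetric]) auto
  then show ?thesis using assms(1) by (intro eq_vecI) auto
qed

lemma left_inverse_mat:
  fixes A :: "real Matrix.mat"
  assumes A: "A \<in> carrier_mat n nc" and rk: "vec_space.rank n A = nc"
  shows "\<exists>B. B \<in> carrier_mat nc n \<and> B * A = 1\<^sub>m nc"
proof -
  define G where "G = transpose_mat A * A"
  have G: "G \<in> carrier_mat nc nc" using A unfolding G_def by auto
  have ker: "G *\<^sub>v v = 0\<^sub>v nc \<Longrightarrow> v = 0\<^sub>v nc" if v: "v \<in> carrier_vec nc" for v
  proof -
    assume Gv: "G *\<^sub>v v = 0\<^sub>v nc"
    have Avc: "A *\<^sub>v v \<in> carrier_vec n" using A v by auto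
    have "G *\<^sub>v v = transpose_mat A *\<^sub>v (A *\<^sub>v v)"
      unfolding G_def using A v by (simp add: assoc_mult_mat_vec[of _ nc n _ nc])
    then have "(transpose_mat A *\<^sub>v (A *\<^sub>v v)) \<bullet> v = 0\<^sub>v nc \<bullet> v" using Gv v by simp
    then have "(transpose_mat A *\<^sub>v (A *\<^sub>v v)) \<bullet> v = 0" using v by simp
    then have "(A *\<^sub>v v) \<bullet> (A *\<^sub>v v) = 0"
      using transpose_vec_mult_scalar[OF A v Avc] by simp
    then have "A *\<^sub>v v = 0\<^sub>v n" by (rule self_scalar_zero[OF Avc])
    then show "v = 0\<^sub>v nc" by (rule vec_space.full_rank_kernel[OF A rk v])
  qed
  have "det G \<noteq> 0"
    using det_0_iff_vec_prod_zero_field[OF G] ker by blast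
  then have "G \<in> Units (ring_mat TYPE(real) nc ())" by (rule det_non_zero_imp_unit[OF G])
  then obtain H where H: "H \<in> carrier_mat nc nc" "H * G = 1\<^sub>m nc"
    unfolding Units_def ring_mat_def by auto
  define B where "B = H * transpose_mat A"
  have "B * A = H * G"
    unfolding B_def G_def using H A by (simp add: assoc_mult_mat[of _ nc nc _ n _ nc])
  moreover have "B \<in> carrier_mat nc n" unfolding B_def using H A by auto
  ultimately show ?thesis using H by auto
qed

lemma M_left_inverse:
  assumes "vec_space.rank r (Mmat q r m) = m + 1"
  shows "\<exists>Bf :: nat \<Rightarrow> nat \<Rightarrow> real. \<forall>d e. d \<le> m \<longrightarrow> e \<le> m \<longrightarrow>
     (\<Sum>t\<in>{1..r}. Bf d t * Ptrans q t 0 (int e)) = (if d = e then 1 else 0)"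
proof -
  have Mc: "Mmat q r m \<in> carrier_mat r (m + 1)" unfolding Mmat_def by simp
  obtain B where B: "B \<in> carrier_mat (m + 1) r" "B * Mmat q r m = 1\<^sub>m (m + 1)"
    using left_inverse_mat[OF Mc assms] by blast
  define Bf where "Bf d t = B $$ (d, t - 1)" for d t
  have "(\<Sum>t\<in>{1..r}. Bf d t * Ptrans q t 0 (int e)) = (if d = e then 1 else 0)"
    if d: "d \<le> m" and e: "e \<le> m" for d e
  proof -
    have "(B * Mmat q r m) $$ (d, e) = (\<Sum>i\<in>{0..<r}. B $$ (d, i) * Ptrans q (Suc i) 0 (int e))"
      using B(1) d e by (simp add: scalar_prod_def Mmat_def)
    also have "\<dots> = (\<Sum>t\<in>Suc ` {0..<r}. Bf d t * Ptrans q t 0 (int e))"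
      by (subst sum.reindex) (auto simp: Bf_def)
    also have "Suc ` {0..<r} = {1..r}" by auto
    finally show ?thesis using B(2) d e by simp
  qed
  then show ?thesis by blast
qed



fun prodB :: "(nat \<Rightarrow> nat \<Rightarrow> real) \<Rightarrow> nat list \<Rightarrow> nat list \<Rightarrow> real" where
  "prodB Bf (d # ds) (t # ts) = Bf d t * prodB Bf ds ts"
| "prodB Bf _ _ = 1"

lemma idx_d_eq: "idx_d k m = lists_of {0..m} k"
  unfolding idx_d_def lists_of_def by simp

lemma idx_t_eq: "idx_t k r = lists_of {1..r} k"
  unfolding idx_t_def lists_of_def by simp

lemma lists_of_Suc_mem: "xs \<in> lists_of A (Suc n) \<Longrightarrow> \<exists>a ys. xs = a # ys \<and> a \<in> A \<and> ys \<in> lists_of A n"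
  unfolding lists_of_Suc by auto

lemma ortho:
  assumes Bf: "\<forall>d e. d \<le> m \<longrightarrow> e \<le> m \<longrightarrow> (\<Sum>t\<in>{1..r}. Bf d t * Ptrans q t 0 (int e)) = (if d = e then 1 else 0)"
  shows "ds \<in> lists_of {0..m} k \<Longrightarrow> es \<in> lists_of {0..m} k \<Longrightarrow>
    (\<Sum>ts\<in>lists_of {1..r} k. prodB Bf ds ts * prodM q ts es) = (if ds = es then 1 else 0)"
proof (induction k arbitrary: ds es)
  case 0
  then show ?case by simp
next
  case (Suc k)
  from lists_of_Suc_mem[OF Suc.prems(1)] obtain d ds' where ds: "ds = d # ds'" "d \<in> {0..m}" "ds' \<in> lists_of {0..m} k" by blast
  from lists_of_Suc_mem[OF Suc.prems(2)] obtain e es' where es: "es = e # es'" "e \<in> {0..m}" "es' \<in> lists_of {0..m} k" by blast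
  have "(\<Sum>ts\<in>lists_of {1..r} (Suc k). prodB Bf ds ts * prodM q ts es)
      = (\<Sum>t\<in>{1..r}. \<Sum>ts\<in>lists_of {1..r} k. (Bf d t * Ptrans q t 0 (int e)) * (prodB Bf ds' ts * prodM q ts es'))"
    by (simp add: sum_lists_of_Suc ds es mult_ac)
  also have "\<dots> = (\<Sum>t\<in>{1..r}. (Bf d t * Ptrans q t 0 (int e)) * (\<Sum>ts\<in>lists_of {1..r} k. prodB Bf ds' ts * prodM q ts es'))"
    by (simp only: sum_distrib_left)
  also have "\<dots> = (\<Sum>t\<in>{1..r}. Bf d t * Ptrans q t 0 (int e)) * (\<Sum>ts\<in>lists_of {1..r} k. prodB Bf ds' ts * prodM q ts es')"
    by (simp only: sum_distrib_right)
  also have "\<dots> = (if d = e then 1 else 0) * (if ds' = es' then 1 else 0)"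
    using Bf ds es Suc.IH[OF ds(3) es(3)] by simp
  also have "\<dots> = (if ds = es then 1 else 0)" using ds es by simp
  finally show ?case .
qed

lemma prob_integral_bound:
  fixes \<phi> :: "real \<Rightarrow> real"
  assumes P: "prob_space M" and S: "sets M = sets borel" and \<phi>m: "\<phi> \<in> borel_measurable borel"
    and \<phi>b: "\<And>x. \<bar>\<phi> x\<bar> \<le> C"
  shows "\<bar>\<integral>x. \<phi> x \<partial>M\<bar> \<le> C"
proof -
  interpret prob_space M by (rule P)
  have m: "\<phi> \<in> borel_measurable M" using \<phi>m by (simp add: measurable_cong_sets[OF S refl])
  have "\<bar>\<integral>x. \<phi> x \<partial>M\<bar> \<le> (\<integral>x. \<bar>\<phi> x\<bar> \<partial>M)" by (rule integral_abs_bound)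
  also have "\<dots> \<le> (\<integral>x. C \<partial>M)"
    apply (rule integral_mono)
      apply (rule integrable_const_bound[where B=C])
    using \<phi>b m by auto
  also have "\<dots> = C" by (simp add: prob_space)
  finally show ?thesis .
qed

lemma p_t_finite:
  fixes \<eta> :: "int \<Rightarrow> real measure" and \<phi> :: "real \<Rightarrow> real"
  assumes P: "\<And>z. prob_space (\<eta> z)" and S: "\<And>z. sets (\<eta> z) = sets borel"
    and \<phi>m: "\<phi> \<in> borel_measurable borel" and \<phi>b: "\<And>x. \<bar>\<phi> x\<bar> \<le> C"
    and W: "finite W" and fW: "\<And>z. site_mean \<eta> \<phi> z \<noteq> 0 \<Longrightarrow> z \<in> W"
    and ts: "\<forall>t\<in>set ts. 1 \<le> t"
  shows "p_t q \<eta> \<phi> ts = (\<Sum>z\<in>W. Vg q (site_mean \<eta> \<phi>) (site_mean \<eta> \<phi>) ts z)"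
proof -
  define f where "f = site_mean \<eta> \<phi>"
  have fb: "\<bar>f x\<bar> \<le> C" for x
    unfolding f_def site_mean_def by (rule prob_integral_bound[OF P S \<phi>m \<phi>b])
  have eq: "(\<integral>x. (\<Prod>i\<in>{0..length ts}. \<phi> (x (sum_list (take i ts)))) \<partial>obs_law q \<eta> (sum_list ts) z)
      = Vg q f f ts z" for z
    unfolding obs_integral[OF P S \<phi>m \<phi>b ts] f_def[symmetric]
    by (rule J_eq[OF fb fb])
  have "p_t q \<eta> \<phi> ts = infsum (Vg q f f ts) UNIV"
    unfolding p_t_def eq ..
  also have "\<dots> = infsum (Vg q f f ts) W"
  proof (rule infsum_cong_neutral)
    fix x assume "x \<in> UNIV - W"
    then have "f x = 0" using fW unfolding f_def by blast
    then show "Vg q f f ts x = 0" by (rule Vg_zero)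
  qed auto
  also have "\<dots> = (\<Sum>z\<in>W. Vg q f f ts z)" using W by simp
  finally show ?thesis unfolding f_def .
qed

lemma Qd_finite:
  assumes W: "finite W" and fW: "\<And>z. site_mean \<eta> \<phi> z \<noteq> 0 \<Longrightarrow> z \<in> W"
  shows "Qd \<eta> \<phi> ds = sum (\<lambda>zs. prod_list (map (site_mean \<eta> \<phi>) zs))
     {zs \<in> lists_of W (Suc (length ds)). adiff zs = ds}"
proof -
  let ?T = "{zs \<in> lists_of W (Suc (length ds)). adiff zs = ds}"
  have fin: "finite ?T" using finite_lists_of[OF W] by simp
  have "Qd \<eta> \<phi> ds = infsum (\<lambda>zs. prod_list (map (site_mean \<eta> \<phi>) zs)) ?T"
    unfolding Qd_def
  proof (rule infsum_cong_neutral)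
    fix zs assume zs: "zs \<in> ?T - {zs. length zs = length ds + 1 \<and> (\<forall>j<length ds. \<bar>zs ! Suc j - zs ! j\<bar> = int (ds ! j))}"
    then show "prod_list (map (site_mean \<eta> \<phi>) zs) = 0"
      using adiff_cond[of zs ds] by (auto simp: lists_of_def)
  next
    fix zs assume zs: "zs \<in> {zs. length zs = length ds + 1 \<and> (\<forall>j<length ds. \<bar>zs ! Suc j - zs ! j\<bar> = int (ds ! j))} - ?T"
    then have "adiff zs = ds" "length zs = Suc (length ds)" using adiff_cond[of zs ds] by auto
    then have "\<not> set zs \<subseteq> W" using zs by (auto simp: lists_of_def)
    then obtain z where "z \<in> set zs" "z \<notin> W" by blast
    then have "0 \<in> set (map (site_mean \<eta> \<phi>) zs)" using fW by force
    then show "prod_list (map (site_mean \<eta> \<phi>) zs) = 0" by (simp add: prod_list_zero_iff)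
  qed simp
  also have "\<dots> = sum (\<lambda>zs. prod_list (map (site_mean \<eta> \<phi>) zs)) ?T" using fin by simp
  finally show ?thesis .
qed

lemma group_adiff:
  fixes F :: "int list \<Rightarrow> real" and G :: "nat list \<Rightarrow> real"
  assumes L: "finite L" and D: "finite D" and sub: "adiff ` L \<subseteq> D"
  shows "(\<Sum>zs\<in>L. F zs * G (adiff zs)) = (\<Sum>d\<in>D. G d * sum F {zs \<in> L. adiff zs = d})"
proof -
  have "(\<Sum>zs\<in>L. F zs * G (adiff zs)) = (\<Sum>d\<in>D. \<Sum>zs\<in>{zs \<in> L. adiff zs = d}. F zs * G (adiff zs))"
    by (rule sum.group[OF L D sub, symmetric])
  also have "\<dots> = (\<Sum>d\<in>D. G d * sum F {zs \<in> L. adiff zs = d})"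
  proof (rule sum.cong[OF refl])
    fix d
    have "(\<Sum>zs\<in>{zs \<in> L. adiff zs = d}. F zs * G (adiff zs)) = (\<Sum>zs\<in>{zs \<in> L. adiff zs = d}. F zs * G d)"
      by (rule sum.cong) auto
    also have "\<dots> = G d * sum F {zs \<in> L. adiff zs = d}"
      by (metis (no_types) sum_distrib_right mult.commute)
    finally show "(\<Sum>zs\<in>{zs \<in> L. adiff zs = d}. F zs * G (adiff zs)) = G d * sum F {zs \<in> L. adiff zs = d}" .
  qed
  finally show ?thesis .
qed



theorem proposition3p3:
  fixes q :: "int pmf" and m r k :: nat
  assumes "admissible_q q" and "aperiodic_q q"
    and "vec_space.rank r (Mmat q r m) = m + 1"
  shows "\<exists>A :: nat list \<Rightarrow> nat list \<Rightarrow> real.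
     \<forall>(\<alpha> :: real measure) (\<eta> :: int \<Rightarrow> real measure) (\<phi> :: real \<Rightarrow> real).
       scenery \<alpha> \<eta> \<and> scenery_len \<alpha> \<eta> \<le> int m
       \<and> \<phi> \<in> borel_measurable borel \<and> bounded (range \<phi>) \<and> (\<integral>x. \<phi> x \<partial>\<alpha>) = 0
       \<longrightarrow> (\<forall>ds \<in> idx_d k m. Qd \<eta> \<phi> ds = (\<Sum>ts \<in> idx_t k r. A ds ts * p_t q \<eta> \<phi> ts))"
proof -
  obtain Bf where Bf: "\<forall>d e. d \<le> m \<longrightarrow> e \<le> m \<longrightarrow>
     (\<Sum>t\<in>{1..r}. Bf d t * Ptrans q t 0 (int e)) = (if d = e then 1 else 0)"
    using M_left_inverse[OF assms(3)] by blast
  show ?thesis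
  proof (intro exI[of _ "prodB Bf"] allI impI ballI)
    fix \<alpha> :: "real measure" and \<eta> :: "int \<Rightarrow> real measure" and \<phi> :: "real \<Rightarrow> real" and ds
    assume H: "scenery \<alpha> \<eta> \<and> scenery_len \<alpha> \<eta> \<le> int m
       \<and> \<phi> \<in> borel_measurable borel \<and> bounded (range \<phi>) \<and> (\<integral>x. \<phi> x \<partial>\<alpha>) = 0"
      and ds: "ds \<in> idx_d k m"
    define S where "S = {z. \<eta> z \<noteq> \<alpha>}"
    define a where "a = Min S"
    define W where "W = {a..a + int m}"
    define f where "f = site_mean \<eta> \<phi>"
    have P: "\<And>z. prob_space (\<eta> z)" and Ss: "\<And>z. sets (\<eta> z) = sets borel"
      and finS: "finite S" and neS: "S \<noteq> {}"
      using H unfolding scenery_def S_def by auto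
    have len: "Max S - Min S \<le> int m" using H unfolding scenery_len_def S_def by simp
    have \<phi>m: "\<phi> \<in> borel_measurable borel" using H by simp
    obtain C where \<phi>b: "\<And>x. \<bar>\<phi> x\<bar> \<le> C"
      using H unfolding bounded_real by auto
    have finW: "finite W" unfolding W_def by simp
    have fW: "z \<in> W" if "site_mean \<eta> \<phi> z \<noteq> 0" for z
    proof -
      have "z \<in> S"
      proof (rule ccontr)
        assume "z \<notin> S"
        then have "\<eta> z = \<alpha>" unfolding S_def by simp
        then have "site_mean \<eta> \<phi> z = 0" using H unfolding site_mean_def by simp
        then show False using that by simp
      qed
      then have "Min S \<le> z" "z \<le> Max S" using finS by auto
      then show ?thesis using len unfolding W_def a_def by auto
    qed
    have Wsub: "W \<subseteq> {a..a + int m}" unfolding W_def by simp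
    have p_eq: "p_t q \<eta> \<phi> ts = (\<Sum>e\<in>idx_d k m. prodM q ts e * Qd \<eta> \<phi> e)"
      if ts: "ts \<in> idx_t k r" for ts
    proof -
      have ts1: "\<forall>t\<in>set ts. 1 \<le> t" and tsl: "length ts = k"
        using ts unfolding idx_t_def by auto
      let ?L = "lists_of W (Suc k)"
      have "p_t q \<eta> \<phi> ts = (\<Sum>z\<in>W. Vg q f f ts z)"
        unfolding f_def by (rule p_t_finite[OF P Ss \<phi>m \<phi>b finW fW ts1])
      also have "\<dots> = (\<Sum>z\<in>W. \<Sum>zs\<in>lists_of W k. prod_list (map f (z # zs)) * prodM q ts (adiff (z # zs)))"
        using Vg_sum[OF assms(1) finW, of f ts] fW tsl unfolding f_def by simp
      also have "\<dots> = (\<Sum>zs\<in>?L. prod_list (map f zs) * prodM q ts (adiff zs))"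
        by (rule sum_lists_of_Suc[OF finW, symmetric])
      also have "\<dots> = (\<Sum>e\<in>idx_d k m. prodM q ts e * sum (\<lambda>zs. prod_list (map f zs)) {zs \<in> ?L. adiff zs = e})"
      proof (rule group_adiff)
        show "finite ?L" by (rule finite_lists_of[OF finW])
        show "finite (idx_d k m)" unfolding idx_d_eq by (rule finite_lists_of) simp
        show "adiff ` ?L \<subseteq> idx_d k m"
        proof
          fix d assume "d \<in> adiff ` ?L"
          then obtain zs where zs: "zs \<in> ?L" "d = adiff zs" by blast
          then have "length d = k" using adiff_len[of zs] by (simp add: lists_of_def)
          moreover have "set d \<subseteq> {0..m}"
            using zs adiff_set[of zs a m] Wsub by (auto simp: lists_of_def)
          ultimately show "d \<in> idx_d k m" unfolding idx_d_def by simp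
        qed
      qed
      also have "\<dots> = (\<Sum>e\<in>idx_d k m. prodM q ts e * Qd \<eta> \<phi> e)"
      proof (rule sum.cong[OF refl])
        fix e assume "e \<in> idx_d k m"
        then have "length e = k" unfolding idx_d_def by simp
        then show "prodM q ts e * sum (\<lambda>zs. prod_list (map f zs)) {zs \<in> ?L. adiff zs = e} = prodM q ts e * Qd \<eta> \<phi> e"
          using Qd_finite[OF finW fW, where ds=e] unfolding f_def by simp
      qed
      finally show ?thesis .
    qed
    have "(\<Sum>ts\<in>idx_t k r. prodB Bf ds ts * p_t q \<eta> \<phi> ts)
        = (\<Sum>ts\<in>idx_t k r. \<Sum>e\<in>idx_d k m. Qd \<eta> \<phi> e * (prodB Bf ds ts * prodM q ts e))"
      by (rule sum.cong[OF refl]) (simp add: p_eq sum_distrib_left mult_ac)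
    also have "\<dots> = (\<Sum>e\<in>idx_d k m. Qd \<eta> \<phi> e * (\<Sum>ts\<in>idx_t k r. prodB Bf ds ts * prodM q ts e))"
      by (subst sum.swap) (simp add: sum_distrib_left)
    also have "\<dots> = (\<Sum>e\<in>idx_d k m. Qd \<eta> \<phi> e * (if ds = e then 1 else 0))"
    proof (rule sum.cong[OF refl])
      fix e assume "e \<in> idx_d k m"
      then show "Qd \<eta> \<phi> e * (\<Sum>ts\<in>idx_t k r. prodB Bf ds ts * prodM q ts e) = Qd \<eta> \<phi> e * (if ds = e then 1 else 0)"
        using ortho[OF Bf, of ds k e] ds unfolding idx_d_eq idx_t_eq by simp
    qed
    also have "\<dots> = (\<Sum>e\<in>idx_d k m. if ds = e then Qd \<eta> \<phi> e else 0)"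
      by (rule sum.cong) auto
    also have "\<dots> = Qd \<eta> \<phi> ds"
      using ds by (simp add: idx_d_eq finite_lists_of)
    finally show "Qd \<eta> \<phi> ds = (\<Sum>ts\<in>idx_t k r. prodB Bf ds ts * p_t q \<eta> \<phi> ts)" by simp
  qed
qed


end
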